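(* Let $X$ be a real Banach space. Then $X$ is fully Mazur if and only if $S_1(Y)=X^*$ for every norming and norm-closed linear subspace $Y\subset X^*$.
   Context: For $A\subset X^*$, $S_1(A)$ denotes the set of all limits of $w^*$-convergent sequences contained in $A$. A linear subspace $Y\subset X^*$ is norming if $|||x|||=\sup\{x^*(x): x^*\in Y,\ \|x^*\|\le 1\}$ defines an equivalent norm on $X$. $X$ is fully Mazur if for every norming and norm-closed subspace $Y\subset X^*$, every $w^*$-sequentially continuous linear functional $f:Y\to\mathbb{R}$ is $w^*$-continuous. *)

theory Defs
  imports "HOL-Analysis.Analysis"
begin

(* The dual space X* of a real Banach space X (a type of class banach) is
  the type of bounded linear functionals  'a \<Rightarrow>\<^sub>L real  with the operator norm. *)

definition wstar_topology :: "('a::real_normed_vector \<Rightarrow>\<^sub>L real) topology" where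
  "wstar_topology = pullback_topology UNIV blinfun_apply (powertop_real UNIV)"

definition wstar_conv :: "(nat \<Rightarrow> ('a::real_normed_vector \<Rightarrow>\<^sub>L real)) \<Rightarrow> ('a \<Rightarrow>\<^sub>L real) \<Rightarrow> bool" where
  "wstar_conv s g \<longleftrightarrow> (\<forall>x. (\<lambda>n. blinfun_apply (s n) x) \<longlonglongrightarrow> blinfun_apply g x)"

definition S1 :: "('a::real_normed_vector \<Rightarrow>\<^sub>L real) set \<Rightarrow> ('a \<Rightarrow>\<^sub>L real) set" where
  "S1 A = {g. \<exists>s. (\<forall>n. s n \<in> A) \<and> wstar_conv s g}"

(* Norming subspace: a linear subspace Y such that
  |||x||| = sup { y x : y \<in> Y, norm y \<le> 1 } is an equivalent norm on X.
  Since |||x||| \<le> norm x always, this means |||x||| \<ge> c * norm x for some c > 0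
  (which also makes ||| . ||| a norm). *)
definition norming :: "('a::real_normed_vector \<Rightarrow>\<^sub>L real) set \<Rightarrow> bool" where
  "norming Y \<longleftrightarrow> subspace Y \<and>
     (\<exists>c>0. \<forall>x. c * norm x \<le> (SUP y\<in>{y\<in>Y. norm y \<le> 1}. blinfun_apply y x))"

(* A functional f : Y \<rightarrow> R (represented by a total function, only values on Y matter). *)
definition linear_on_subspace :: "('a::real_normed_vector \<Rightarrow>\<^sub>L real) set \<Rightarrow> (('a \<Rightarrow>\<^sub>L real) \<Rightarrow> real) \<Rightarrow> bool" where
  "linear_on_subspace Y f \<longleftrightarrow>
     (\<forall>y\<in>Y. \<forall>z\<in>Y. \<forall>a b. f (a *\<^sub>R y + b *\<^sub>R z) = a * f y + b * f z)"

definition wstar_seq_continuous_on :: "('a::real_normed_vector \<Rightarrow>\<^sub>L real) set \<Rightarrow> (('a \<Rightarrow>\<^sub>L real) \<Rightarrow> real) \<Rightarrow> bool" where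
  "wstar_seq_continuous_on Y f \<longleftrightarrow>
     (\<forall>s g. (\<forall>n. s n \<in> Y) \<longrightarrow> g \<in> Y \<longrightarrow> wstar_conv s g \<longrightarrow> (\<lambda>n. f (s n)) \<longlonglongrightarrow> f g)"

definition wstar_continuous_on :: "('a::real_normed_vector \<Rightarrow>\<^sub>L real) set \<Rightarrow> (('a \<Rightarrow>\<^sub>L real) \<Rightarrow> real) \<Rightarrow> bool" where
  "wstar_continuous_on Y f \<longleftrightarrow> continuous_map (subtopology wstar_topology Y) euclideanreal f"

definition fully_Mazur :: "'a::banach itself \<Rightarrow> bool" where
  "fully_Mazur _ \<longleftrightarrow>
     (\<forall>Y :: ('a \<Rightarrow>\<^sub>L real) set. norming Y \<and> closed Y \<longrightarrow>
        (\<forall>f. linear_on_subspace Y f \<and> wstar_seq_continuous_on Y f \<longrightarrow> wstar_continuous_on Y f))"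

end

theory Submission
  imports Defs
begin

lemma bdd_eval:
  fixes Y :: "('a::real_normed_vector \<Rightarrow>\<^sub>L real) set" and x :: 'a
  shows "bdd_above ((\<lambda>y. blinfun_apply y x) ` {y\<in>Y. norm y \<le> 1})"
proof (rule bdd_aboveI2)
  fix y assume "y \<in> {y\<in>Y. norm y \<le> (1::real)}"
  then have "norm y \<le> 1" by auto
  have "blinfun_apply y x \<le> norm (blinfun_apply y x)" by simp
  also have "\<dots> \<le> norm y * norm x" by (rule norm_blinfun)
  also have "\<dots> \<le> 1 * norm x" using \<open>norm y \<le> 1\<close> by (intro mult_right_mono) auto
  finally show "blinfun_apply y x \<le> norm x" by simp
qed

lemma norming_bound:
  assumes "norming Y"
  obtains c where "c > 0" "\<And>x M. M \<ge> 0 \<Longrightarrow> (\<And>y. y \<in> Y \<Longrightarrow> blinfun_apply y x \<le> M * norm y) \<Longrightarrow> c * norm x \<le> M"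
proof -
  from assms obtain c where c: "c > 0" "\<forall>x. c * norm x \<le> (SUP y\<in>{y\<in>Y. norm y \<le> 1}. blinfun_apply y x)"
    and sub: "subspace Y" unfolding norming_def by auto
  show ?thesis
  proof (rule that[OF c(1)])
    fix x and M :: real
    assume M: "M \<ge> 0" and H: "\<And>y. y \<in> Y \<Longrightarrow> blinfun_apply y x \<le> M * norm y"
    have "0 \<in> {y\<in>Y. norm y \<le> 1}" using sub by (simp add: subspace_0)
    then have ne: "{y\<in>Y. norm y \<le> 1} \<noteq> {}" by blast
    have "(SUP y\<in>{y\<in>Y. norm y \<le> 1}. blinfun_apply y x) \<le> M"
    proof (rule cSUP_least[OF ne])
      fix y assume "y \<in> {y\<in>Y. norm y \<le> 1}"
      then have "y \<in> Y" "norm y \<le> 1" by auto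
      then have "blinfun_apply y x \<le> M * norm y" using H by auto
      also have "\<dots> \<le> M * 1" using \<open>norm y \<le> 1\<close> M by (intro mult_left_mono) auto
      finally show "blinfun_apply y x \<le> M" by simp
    qed
    then show "c * norm x \<le> M" using c(2) by (meson order_trans)
  qed
qed

lemma norming_sep:
  assumes "norming Y" "\<And>h. h \<in> Y \<Longrightarrow> blinfun_apply h x = 0"
  shows "x = 0"
proof -
  obtain c where c: "c > 0" "\<And>x M. M \<ge> 0 \<Longrightarrow> (\<And>y. y \<in> Y \<Longrightarrow> blinfun_apply y x \<le> M * norm y) \<Longrightarrow> c * norm x \<le> M"
    using norming_bound[OF assms(1)] by metis
  have "c * norm x \<le> 0" by (rule c(2)) (auto simp: assms(2))
  then show ?thesis using c(1) by (simp add: mult_le_0_iff)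
qed

lemma lin_blin: "linear (blinfun_apply h)"
  by (simp add: bounded_linear.linear blinfun.bounded_linear_right)

lemma span_lemma:
  fixes F :: "'a::real_normed_vector set" and Y :: "('a \<Rightarrow>\<^sub>L real) set"
  assumes fin: "finite F" and sub: "subspace Y"
    and sep: "\<And>x. (\<And>h. h \<in> Y \<Longrightarrow> blinfun_apply h x = 0) \<Longrightarrow> x = 0"
  shows "\<And>x. (\<And>h. h \<in> Y \<Longrightarrow> (\<forall>y\<in>F. blinfun_apply h y = 0) \<Longrightarrow> blinfun_apply h x = 0) \<Longrightarrow> x \<in> span F"
  using fin
proof (induction F rule: finite_induct)
  case empty
  then show ?case using sep by auto
next
  case (insert a F)
  show ?case
  proof (cases "\<forall>k\<in>Y. (\<forall>y\<in>F. blinfun_apply k y = 0) \<longrightarrow> blinfun_apply k a = 0")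
    case True
    then have aF: "a \<in> span F" using insert.IH by blast
    have "x \<in> span F"
    proof (rule insert.IH)
      fix h assume h: "h \<in> Y" "\<forall>y\<in>F. blinfun_apply h y = 0"
      have "blinfun_apply h a = 0"
        using linear_eq_0_on_span[OF lin_blin, of F h a] h aF by auto
      then show "blinfun_apply h x = 0" using insert.prems h by auto
    qed
    then show ?thesis by (meson span_mono subset_insertI subsetD)
  next
    case False
    then obtain k where k: "k \<in> Y" "\<forall>y\<in>F. blinfun_apply k y = 0" "blinfun_apply k a \<noteq> 0" by blast
    define k' where "k' = (1 / blinfun_apply k a) *\<^sub>R k"
    have k'Y: "k' \<in> Y" unfolding k'_def using sub k(1) by (simp add: subspace_scale)
    have k'a: "blinfun_apply k' a = 1" using k(3) by (simp add: k'_def blinfun.scaleR_left)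
    have k'F: "\<forall>y\<in>F. blinfun_apply k' y = 0" using k(2) by (simp add: k'_def blinfun.scaleR_left)
    define x' where "x' = x - blinfun_apply k' x *\<^sub>R a"
    have "x' \<in> span F"
    proof (rule insert.IH)
      fix h assume h: "h \<in> Y" "\<forall>y\<in>F. blinfun_apply h y = 0"
      define h' where "h' = h - blinfun_apply h a *\<^sub>R k'"
      have h'Y: "h' \<in> Y" unfolding h'_def using sub h(1) k'Y by (simp add: subspace_diff subspace_scale)
      have "\<forall>y\<in>insert a F. blinfun_apply h' y = 0"
        using h(2) k'F k'a by (simp add: h'_def blinfun.diff_left blinfun.scaleR_left)
      then have "blinfun_apply h' x = 0" using insert.prems h'Y by auto
      then show "blinfun_apply h x' = 0"
        by (simp add: h'_def x'_def blinfun.diff_right blinfun.scaleR_right blinfun.diff_left blinfun.scaleR_left algebra_simps)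
    qed
    then have "x' \<in> span (insert a F)" by (meson span_mono subset_insertI subsetD)
    moreover have "blinfun_apply k' x *\<^sub>R a \<in> span (insert a F)"
      by (simp add: span_base span_scale)
    ultimately have "x' + blinfun_apply k' x *\<^sub>R a \<in> span (insert a F)" by (rule span_add)
    then show ?thesis by (simp add: x'_def)
  qed
qed

lemma interp_lemma:
  fixes F :: "'a::real_normed_vector set" and Y :: "('a \<Rightarrow>\<^sub>L real) set"
  assumes fin: "finite F" and sub: "subspace Y"
    and sep: "\<And>x. (\<And>h. h \<in> Y \<Longrightarrow> blinfun_apply h x = 0) \<Longrightarrow> x = 0"
  shows "\<exists>h\<in>Y. \<forall>i\<in>F. blinfun_apply h i = blinfun_apply g i"
  using fin
proof (induction F rule: finite_induct)
  case empty
  then show ?case using sub subspace_0 by blast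
next
  case (insert a F)
  then obtain h0 where h0: "h0 \<in> Y" "\<forall>i\<in>F. blinfun_apply h0 i = blinfun_apply g i" by blast
  show ?case
  proof (cases "\<exists>k\<in>Y. (\<forall>y\<in>F. blinfun_apply k y = 0) \<and> blinfun_apply k a \<noteq> 0")
    case True
    then obtain k where k: "k \<in> Y" "\<forall>y\<in>F. blinfun_apply k y = 0" "blinfun_apply k a \<noteq> 0" by blast
    define h where "h = h0 + ((blinfun_apply g a - blinfun_apply h0 a) / blinfun_apply k a) *\<^sub>R k"
    have "h \<in> Y" unfolding h_def using sub h0(1) k(1) by (simp add: subspace_add subspace_scale)
    moreover have "\<forall>i\<in>insert a F. blinfun_apply h i = blinfun_apply g i"
      using h0(2) k(2,3) by (simp add: h_def blinfun.add_left blinfun.scaleR_left)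
    ultimately show ?thesis by blast
  next
    case False
    have "a \<in> span F"
      by (rule span_lemma[OF insert.hyps(1) sub sep]) (use False in auto)
    then have "blinfun_apply (g - h0) a = 0"
      using linear_eq_0_on_span[OF lin_blin, of F "g - h0" a] h0(2) by (auto simp: blinfun.diff_left)
    then have "\<forall>i\<in>insert a F. blinfun_apply h0 i = blinfun_apply g i"
      using h0(2) by (simp add: blinfun.diff_left)
    then show ?thesis using h0(1) by blast
  qed
qed


lemma alg: "(s::real) * (t1 - t0) = 1 \<Longrightarrow> s * (a - b) = G - s * ((b + t1 * G) - (a + t0 * G))"
proof -
  assume h: "s * (t1 - t0) = 1"
  have "G - s * ((b + t1 * G) - (a + t0 * G)) = s * (a - b) + G * (1 - s * (t1 - t0))" by (simp add: algebra_simps)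
  then show ?thesis using h by simp
qed

lemma Y_sub_S1: "Y \<subseteq> S1 Y"
  unfolding S1_def wstar_conv_def by (auto intro!: exI[of _ "\<lambda>n. _"])

lemma dir1:
  fixes Y :: "('a::banach \<Rightarrow>\<^sub>L real) set"
  assumes FM: "fully_Mazur TYPE('a)" and Yn: "norming Y" and Yc: "closed Y"
  shows "S1 Y = UNIV"
proof (rule ccontr)
  assume "S1 Y \<noteq> UNIV"
  then obtain g where gS: "g \<notin> S1 Y" by blast
  then have gY: "g \<notin> Y" using Y_sub_S1 by blast
  have sub: "subspace Y" using Yn unfolding norming_def by auto
  have Y0: "0 \<in> Y" using sub subspace_0 by blast
  define Z where "Z = {y + t *\<^sub>R g | y t. y \<in> Y}"
  define f where "f z = (SOME t. z - t *\<^sub>R g \<in> Y)" for z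
  have fZ: "f (y + t *\<^sub>R g) = t" if "y \<in> Y" for y t
  proof -
    have ex: "y + t *\<^sub>R g - t *\<^sub>R g \<in> Y" using that by simp
    have "\<And>t'. y + t *\<^sub>R g - t' *\<^sub>R g \<in> Y \<Longrightarrow> t' = t"
    proof (rule ccontr)
      fix t' assume a: "y + t *\<^sub>R g - t' *\<^sub>R g \<in> Y" and ne: "t' \<noteq> t"
      have "(y + t *\<^sub>R g - t' *\<^sub>R g) - y \<in> Y" by (rule subspace_diff[OF sub a that])
      then have "(t - t') *\<^sub>R g \<in> Y" by (simp add: algebra_simps)
      then have "(1 / (t - t')) *\<^sub>R ((t - t') *\<^sub>R g) \<in> Y" by (rule subspace_scale[OF sub])
      then have "g \<in> Y" using ne by simp
      then show False using gY by blast
    qed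
    then show ?thesis unfolding f_def using someI[of "\<lambda>t'. y + t *\<^sub>R g - t' *\<^sub>R g \<in> Y", OF ex] by blast
  qed
  have YZ: "Y \<subseteq> Z" unfolding Z_def by (force intro: exI[of _ 0])
  have gZ: "g \<in> Z" unfolding Z_def using Y0 by (force intro: exI[of _ 1])
  have subZ: "subspace Z"
    unfolding subspace_def
  proof (intro conjI ballI allI)
    show "0 \<in> Z" using YZ Y0 by blast
  next
    fix x z assume "x \<in> Z" "z \<in> Z"
    then obtain y1 t1 y2 t2 where "x = y1 + t1 *\<^sub>R g" "z = y2 + t2 *\<^sub>R g" "y1 \<in> Y" "y2 \<in> Y"
      unfolding Z_def by blast
    then show "x + z \<in> Z" unfolding Z_def using sub
      by (auto simp: subspace_add algebra_simps intro!: exI[of _ "y1 + y2"] exI[of _ "t1 + t2"])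
  next
    fix c :: real and x assume "x \<in> Z"
    then obtain y1 t1 where "x = y1 + t1 *\<^sub>R g" "y1 \<in> Y" unfolding Z_def by blast
    then show "c *\<^sub>R x \<in> Z" unfolding Z_def using sub
      by (auto simp: subspace_scale algebra_simps intro!: exI[of _ "c *\<^sub>R y1"] exI[of _ "c * t1"])
  qed
  have normZ: "norming Z"
  proof -
    obtain c where c: "c > 0" "\<forall>x. c * norm x \<le> (SUP y\<in>{y\<in>Y. norm y \<le> 1}. blinfun_apply y x)"
      using Yn unfolding norming_def by auto
    have "c * norm x \<le> (SUP y\<in>{y\<in>Z. norm y \<le> 1}. blinfun_apply y x)" for x
    proof -
      have "(SUP y\<in>{y\<in>Y. norm y \<le> 1}. blinfun_apply y x) \<le> (SUP y\<in>{y\<in>Z. norm y \<le> 1}. blinfun_apply y x)"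
        by (rule cSUP_subset_mono) (use Y0 YZ bdd_eval in auto)
      then show ?thesis using c(2) by (meson order_trans)
    qed
    then show ?thesis unfolding norming_def using subZ c(1) by blast
  qed
  have infpos: "infdist g Y > 0"
    using in_closed_iff_infdist_zero[OF Yc] Y0 gY infdist_nonneg[of g Y] by force
  define d where "d = infdist g Y"
  have dpos: "d > 0" using infpos d_def by simp
  have key: "\<bar>t\<bar> * d \<le> norm (y + t *\<^sub>R g)" if "y \<in> Y" for y t
  proof (cases "t = 0")
    case True then show ?thesis by simp
  next
    case False
    have "- (1/t) *\<^sub>R y \<in> Y" by (rule subspace_scale[OF sub that])
    then have "d \<le> dist g (- (1/t) *\<^sub>R y)" unfolding d_def by (rule infdist_le)
    also have "\<dots> = norm (g + (1/t) *\<^sub>R y)" by (simp add: dist_norm)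
    finally have "\<bar>t\<bar> * d \<le> \<bar>t\<bar> * norm (g + (1/t) *\<^sub>R y)" by (simp add: mult_left_mono)
    also have "\<dots> = norm (t *\<^sub>R (g + (1/t) *\<^sub>R y))" by simp
    also have "t *\<^sub>R (g + (1/t) *\<^sub>R y) = y + t *\<^sub>R g" using False by (simp add: algebra_simps)
    finally show ?thesis .
  qed
  have closedZ: "closed Z"
    unfolding closed_sequential_limits
  proof (intro allI impI, elim conjE)
    fix x l assume xZ: "\<forall>n. x n \<in> Z" and xl: "x \<longlonglongrightarrow> l"
    then have "\<forall>n. \<exists>y t. x n = y + t *\<^sub>R g \<and> y \<in> Y" unfolding Z_def by blast
    then obtain yy tt where yt: "\<And>n. x n = yy n + tt n *\<^sub>R g" "\<And>n. yy n \<in> Y" by metis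
    have "Cauchy x" using xl by (rule LIMSEQ_imp_Cauchy)
    have "Cauchy tt"
    proof (rule CauchyI)
      fix e :: real assume "e > 0"
      then obtain M where M: "\<forall>m\<ge>M. \<forall>n\<ge>M. dist (x m) (x n) < e * d"
        using \<open>Cauchy x\<close> dpos unfolding Cauchy_def by (meson mult_pos_pos)
      show "\<exists>M. \<forall>m\<ge>M. \<forall>n\<ge>M. norm (tt m - tt n) < e"
      proof (intro exI allI impI)
        fix m n assume "m \<ge> M" "n \<ge> M"
        have "\<bar>tt m - tt n\<bar> * d \<le> norm ((yy m - yy n) + (tt m - tt n) *\<^sub>R g)"
          using key sub yt(2) by (simp add: subspace_diff)
        also have "(yy m - yy n) + (tt m - tt n) *\<^sub>R g = x m - x n" by (simp add: yt(1) algebra_simps)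
        also have "norm (x m - x n) < e * d" using M \<open>m \<ge> M\<close> \<open>n \<ge> M\<close> by (simp add: dist_norm)
        finally show "norm (tt m - tt n) < e" using dpos by simp
      qed
    qed
    then obtain T where T: "tt \<longlonglongrightarrow> T" using Cauchy_convergent_iff convergent_def by blast
    have "(\<lambda>n. x n - tt n *\<^sub>R g) \<longlonglongrightarrow> l - T *\<^sub>R g"
      by (intro tendsto_intros xl T)
    moreover have "\<And>n. x n - tt n *\<^sub>R g = yy n" by (simp add: yt(1))
    ultimately have "yy \<longlonglongrightarrow> l - T *\<^sub>R g" by simp
    then have "l - T *\<^sub>R g \<in> Y" using Yc yt(2) closed_sequential_limits by blast
    then show "l \<in> Z" unfolding Z_def by (force intro: exI[of _ T])
  qed
  have linf: "linear_on_subspace Z f"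
    unfolding linear_on_subspace_def
  proof (intro ballI allI)
    fix z1 z2 a b assume "z1 \<in> Z" "z2 \<in> Z"
    then obtain y1 t1 y2 t2 where e: "z1 = y1 + t1 *\<^sub>R g" "z2 = y2 + t2 *\<^sub>R g" "y1 \<in> Y" "y2 \<in> Y"
      unfolding Z_def by blast
    have "a *\<^sub>R z1 + b *\<^sub>R z2 = (a *\<^sub>R y1 + b *\<^sub>R y2) + (a * t1 + b * t2) *\<^sub>R g"
      by (simp add: e algebra_simps)
    moreover have "a *\<^sub>R y1 + b *\<^sub>R y2 \<in> Y" using sub e by (simp add: subspace_add subspace_scale)
    ultimately show "f (a *\<^sub>R z1 + b *\<^sub>R z2) = a * f z1 + b * f z2"
      using fZ e by simp
  qed
  have seqc: "wstar_seq_continuous_on Z f"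
    unfolding wstar_seq_continuous_on_def
  proof (intro allI impI)
    fix s z assume sZ: "\<forall>n. s n \<in> Z" and zZ: "z \<in> Z" and sz: "wstar_conv s z"
    then have "\<forall>n. \<exists>y t. s n = y + t *\<^sub>R g \<and> y \<in> Y" unfolding Z_def by blast
    then obtain yy tt where yt: "\<And>n. s n = yy n + tt n *\<^sub>R g" "\<And>n. yy n \<in> Y" by metis
    obtain y0 t0 where z0: "z = y0 + t0 *\<^sub>R g" "y0 \<in> Y" using zZ unfolding Z_def by blast
    have fs: "f (s n) = tt n" for n using fZ yt by simp
    have fz: "f z = t0" using fZ z0 by simp
    have "tt \<longlonglongrightarrow> t0"
    proof (rule ccontr)
      assume "\<not> tt \<longlonglongrightarrow> t0"
      then obtain e :: real where e: "e > 0" "\<not> eventually (\<lambda>n. dist (tt n) t0 < e) sequentially"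
        unfolding tendsto_iff by blast
      have "infinite {n. \<not> dist (tt n) t0 < e}"
        using e(2) unfolding cofinite_eq_sequentially[symmetric] eventually_cofinite by simp
      then obtain r :: "nat \<Rightarrow> nat" where r: "strict_mono r" "\<And>n. r n \<in> {n. \<not> dist (tt n) t0 < e}"
        using infinite_enumerate by blast
      have re: "e \<le> \<bar>tt (r n) - t0\<bar>" for n using r(2)[of n] by (simp add: dist_real_def)
      define \<sigma> where "\<sigma> n = 1 / (tt (r n) - t0)" for n
      have \<sigma>b: "\<bar>\<sigma> n\<bar> \<le> 1 / e" for n
        using re[of n] e(1) unfolding \<sigma>_def by (simp add: frac_le)
      define w where "w n = \<sigma> n *\<^sub>R (y0 - yy (r n))" for n
      have wY: "w n \<in> Y" for n unfolding w_def using sub z0(2) yt(2) by (simp add: subspace_diff subspace_scale)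
      have "wstar_conv w g"
        unfolding wstar_conv_def
      proof
        fix x
        have ne: "tt (r n) - t0 \<noteq> 0" for n using re[of n] e(1) by auto
        have weq: "blinfun_apply (w n) x = blinfun_apply g x - \<sigma> n * (blinfun_apply (s (r n)) x - blinfun_apply z x)" for n
        proof -
          have s1: "\<sigma> n * (tt (r n) - t0) = 1" using ne[of n] by (simp add: \<sigma>_def)
          show ?thesis
            using alg[OF s1, of "blinfun_apply y0 x" "blinfun_apply (yy (r n)) x" "blinfun_apply g x"]
            by (simp add: w_def yt(1) z0(1) blinfun.add_left blinfun.diff_left blinfun.scaleR_left)
        qed
        have c1: "(\<lambda>n. blinfun_apply (s (r n)) x - blinfun_apply z x) \<longlonglongrightarrow> 0"
          using LIMSEQ_subseq_LIMSEQ[OF sz[unfolded wstar_conv_def, rule_format, of x] r(1)]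
          by (simp add: o_def LIM_zero)
        have "(\<lambda>n. \<sigma> n * (blinfun_apply (s (r n)) x - blinfun_apply z x)) \<longlonglongrightarrow> 0"
        proof (rule Lim_null_comparison)
          show "\<forall>\<^sub>F n in sequentially. norm (\<sigma> n * (blinfun_apply (s (r n)) x - blinfun_apply z x)) \<le> 1/e * norm (blinfun_apply (s (r n)) x - blinfun_apply z x)"
          proof (intro always_eventually allI)
            fix n
            show "norm (\<sigma> n * (blinfun_apply (s (r n)) x - blinfun_apply z x)) \<le> 1/e * norm (blinfun_apply (s (r n)) x - blinfun_apply z x)"
              using mult_right_mono[OF \<sigma>b[of n] abs_ge_zero[of "blinfun_apply (s (r n)) x - blinfun_apply z x"]]
              by (simp add: abs_mult)
          qed
          show "(\<lambda>n. 1/e * norm (blinfun_apply (s (r n)) x - blinfun_apply z x)) \<longlonglongrightarrow> 0"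
            using tendsto_mult_right_zero[OF tendsto_norm_zero[OF c1], of "1/e"] by simp
        qed
        then have "(\<lambda>n. blinfun_apply g x - \<sigma> n * (blinfun_apply (s (r n)) x - blinfun_apply z x)) \<longlonglongrightarrow> blinfun_apply g x - 0"
          by (intro tendsto_intros)
        then show "(\<lambda>n. blinfun_apply (w n) x) \<longlonglongrightarrow> blinfun_apply g x" by (simp add: weq)
      qed
      then have "g \<in> S1 Y" unfolding S1_def using wY by blast
      then show False using gS by blast
    qed
    then show "(\<lambda>n. f (s n)) \<longlonglongrightarrow> f z" by (simp add: fs fz)
  qed
  have cont: "wstar_continuous_on Z f"
    using FM normZ closedZ linf seqc unfolding fully_Mazur_def by blast
  have "openin (subtopology wstar_topology Z) {x \<in> topspace (subtopology wstar_topology Z). f x \<in> {1/2<..}}"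
    using cont unfolding wstar_continuous_on_def by (intro openin_continuous_map_preimage) auto
  then obtain U where U: "openin wstar_topology U"
    "{x \<in> topspace (subtopology wstar_topology Z). f x \<in> {1/2<..}} = U \<inter> Z"
    unfolding openin_subtopology by blast
  then obtain V where V: "openin (powertop_real UNIV) V" "U = blinfun_apply -` V"
    unfolding wstar_topology_def openin_pullback_topology by auto
  have topW: "topspace (wstar_topology :: ('a \<Rightarrow>\<^sub>L real) topology) = UNIV"
    unfolding wstar_topology_def topspace_pullback_topology by simp
  have fg: "f g = 1" using fZ[OF Y0, of 1] by simp
  have "g \<in> U \<inter> Z" unfolding U(2)[symmetric] using gZ fg topW by simp
  then have "g \<in> U" by blast
  then have "blinfun_apply g \<in> V" using V(2) by simp
  then obtain X where X: "blinfun_apply g \<in> Pi\<^sub>E UNIV X" "\<forall>i. openin euclideanreal (X i)"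
     "finite {i. X i \<noteq> topspace euclideanreal}" "Pi\<^sub>E UNIV X \<subseteq> V"
    using product_topology_open_contains_basis[OF V(1)] by blast
  have sep: "\<And>x. (\<And>h. h \<in> Y \<Longrightarrow> blinfun_apply h x = 0) \<Longrightarrow> x = 0"
    using norming_sep[OF Yn] by blast
  obtain h where h: "h \<in> Y" "\<forall>i\<in>{i. X i \<noteq> topspace euclideanreal}. blinfun_apply h i = blinfun_apply g i"
    using interp_lemma[OF X(3) sub sep] by blast
  have "blinfun_apply h \<in> Pi\<^sub>E UNIV X"
    using X(1) h(2) unfolding PiE_def Pi_def by (auto simp: extensional_def) (metis UNIV_I topspace_euclidean)
  then have "h \<in> U" using X(4) V(2) by auto
  then have "h \<in> U \<inter> Z" using h(1) YZ by blast
  then have "f h > 1/2" unfolding U(2)[symmetric] by simp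
  moreover have "f h = 0" using fZ[OF h(1), of 0] by simp
  ultimately show False by simp
qed


lemma norm_wstar:
  assumes "s \<longlonglongrightarrow> l" shows "wstar_conv s l"
  unfolding wstar_conv_def using blinfun.tendsto[OF assms tendsto_const] by blast

lemma repr:
  fixes Y :: "('a::banach \<Rightarrow>\<^sub>L real) set"
  assumes Yn: "norming Y" and Yc: "closed Y" and lin: "linear_on_subspace Y f"
    and sc: "wstar_seq_continuous_on Y f"
    and H: "\<And>K :: ('a \<Rightarrow>\<^sub>L real) set. norming K \<Longrightarrow> closed K \<Longrightarrow> S1 K = UNIV"
  shows "\<exists>x0. \<forall>y\<in>Y. f y = blinfun_apply y x0"
proof -
  have sub: "subspace Y" using Yn unfolding norming_def by auto
  have Y0: "0 \<in> Y" using sub subspace_0 by blast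
  have f0: "f 0 = 0" using lin Y0 unfolding linear_on_subspace_def
    by (metis add.right_neutral mult_zero_left scaleR_zero_left)
  have fscale: "f (a *\<^sub>R y) = a * f y" if "y \<in> Y" for a y
    using lin that Y0 f0 unfolding linear_on_subspace_def
    by (metis add.right_neutral mult_zero_right scaleR_zero_right)
  have fdiff: "f (y - z) = f y - f z" if "y \<in> Y" "z \<in> Y" for y z
    using lin that unfolding linear_on_subspace_def
    by (metis (no_types, lifting) diff_conv_add_uminus mult.commute mult_minus1_right scaleR_minus1_left scaleR_one mult_1)
  have sc': "\<And>s g. (\<forall>n. s n \<in> Y) \<Longrightarrow> g \<in> Y \<Longrightarrow> wstar_conv s g \<Longrightarrow> (\<lambda>n. f (s n)) \<longlonglongrightarrow> f g"
    using sc unfolding wstar_seq_continuous_on_def by blast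
  obtain B where Bpos: "B > 0" and Bf: "\<And>y. y \<in> Y \<Longrightarrow> \<bar>f y\<bar> \<le> B * norm y"
  proof -
    have "\<exists>B>0. \<forall>y\<in>Y. \<bar>f y\<bar> \<le> B * norm y"
    proof (rule ccontr)
      assume nb: "\<not> ?thesis"
      have "\<forall>n::nat. \<exists>y\<in>Y. \<bar>f y\<bar> > (real n + 1)^2 * norm y"
      proof
        fix n :: nat
        have "(real n + 1)^2 > 0" by simp
        then show "\<exists>y\<in>Y. \<bar>f y\<bar> > (real n + 1)^2 * norm y" using nb by (meson not_le)
      qed
      then obtain yy where yy: "\<And>n. yy n \<in> Y" "\<And>n. \<bar>f (yy n)\<bar> > (real n + 1)^2 * norm (yy n)" by metis
      have ynz: "yy n \<noteq> 0" for n using yy(2)[of n] f0 by auto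
      define w where "w n = (1 / ((real n + 1) * norm (yy n))) *\<^sub>R yy n" for n
      have wY: "w n \<in> Y" for n unfolding w_def using sub yy(1) by (simp add: subspace_scale)
      have nw: "norm (w n) = 1 / (real n + 1)" for n
        using ynz[of n] by (simp add: w_def)
      have nw': "norm (w n) = 1 / real (Suc n)" for n using nw[of n] by simp
      have "(\<lambda>n. 1 / real (Suc n)) \<longlonglongrightarrow> 0" by (rule LIMSEQ_Suc[OF lim_inverse_n'])
      then have "(\<lambda>n. norm (w n)) \<longlonglongrightarrow> 0" unfolding nw' .
      then have "w \<longlonglongrightarrow> 0" by (simp add: tendsto_norm_zero_iff)
      then have "(\<lambda>n. f (w n)) \<longlonglongrightarrow> f 0" using sc' wY Y0 norm_wstar by blast
      then have "eventually (\<lambda>n. \<bar>f (w n)\<bar> < 1) sequentially"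
        using f0 by (auto dest: order_tendstoD(2)[OF tendsto_rabs, of _ 0 _ 1])
      then obtain n where n: "\<bar>f (w n)\<bar> < 1" using eventually_sequentially by auto
      have "f (w n) = f (yy n) / ((real n + 1) * norm (yy n))"
        using fscale[OF yy(1)] by (simp add: w_def)
      then have "\<bar>f (w n)\<bar> = \<bar>f (yy n)\<bar> / ((real n + 1) * norm (yy n))" by simp
      moreover have "\<bar>f (yy n)\<bar> / ((real n + 1) * norm (yy n)) > real n + 1"
      proof -
        have p: "(real n + 1) * norm (yy n) > 0" using ynz[of n] by simp
        have "(real n + 1) * ((real n + 1) * norm (yy n)) < \<bar>f (yy n)\<bar>"
          using yy(2)[of n] by (simp only: power2_eq_square mult.assoc)
        then show ?thesis by (subst pos_less_divide_eq[OF p])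
      qed
      ultimately show False using n by simp
    qed
    then show ?thesis using that by blast
  qed
  obtain c where cpos: "c > 0" and cN: "\<And>x M. M \<ge> 0 \<Longrightarrow> (\<And>y. y \<in> Y \<Longrightarrow> blinfun_apply y x \<le> M * norm y) \<Longrightarrow> c * norm x \<le> M"
    using norming_bound[OF Yn] by metis
  have approx: "\<exists>z. \<forall>y\<in>Y. \<bar>blinfun_apply y z - f y\<bar> \<le> \<delta> * norm y" if dpos: "\<delta> > 0" for \<delta>
  proof (cases "\<forall>y\<in>Y. f y = 0")
    case True
    then show ?thesis using dpos by (auto intro!: exI[of _ 0])
  next
    case False
    then obtain u0 where u0: "u0 \<in> Y" "f u0 \<noteq> 0" by blast
    define u where "u = (1 / f u0) *\<^sub>R u0"
    have uY: "u \<in> Y" unfolding u_def by (rule subspace_scale[OF sub u0(1)])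
    have fu: "f u = 1" unfolding u_def using fscale[OF u0(1)] u0(2) by simp
    define K where "K = {y\<in>Y. f y = 0}"
    have subK: "subspace K" unfolding subspace_def K_def
    proof (intro conjI ballI allI)
      show "0 \<in> {y \<in> Y. f y = 0}" using Y0 f0 by simp
    next
      fix x y assume "x \<in> {y \<in> Y. f y = 0}" "y \<in> {y \<in> Y. f y = 0}"
      then show "x + y \<in> {y \<in> Y. f y = 0}" using lin sub unfolding linear_on_subspace_def
        by (auto simp: subspace_add dest: bspec[of _ _ x] ) (metis mult_1 scaleR_one add.right_neutral mult_zero_right)
    next
      fix a :: real and x assume "x \<in> {y \<in> Y. f y = 0}"
      then show "a *\<^sub>R x \<in> {y \<in> Y. f y = 0}" using fscale sub by (simp add: subspace_scale)
    qed
    have closedK: "closed K"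
      unfolding closed_sequential_limits
    proof (intro allI impI, elim conjE)
      fix s l assume sK: "\<forall>n. s n \<in> K" and sl: "s \<longlonglongrightarrow> l"
      have lY: "l \<in> Y" using Yc sK sl closed_sequential_limits unfolding K_def by blast
      have "(\<lambda>n. f (s n)) \<longlonglongrightarrow> f l" using sc' sK lY norm_wstar[OF sl] unfolding K_def by blast
      moreover have "(\<lambda>n. f (s n)) = (\<lambda>n. 0)" using sK unfolding K_def by auto
      ultimately have "f l = 0" using LIMSEQ_unique tendsto_const by metis
      then show "l \<in> K" using lY unfolding K_def by simp
    qed
    have notnK: "\<not> norming K"
    proof
      assume "norming K"
      then have "S1 K = UNIV" using H closedK by blast
      then obtain s where s: "\<forall>n. s n \<in> K" "wstar_conv s u" unfolding S1_def by blast
      have "(\<lambda>n. f (s n)) \<longlonglongrightarrow> f u" using sc' s uY unfolding K_def by blast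
      moreover have "(\<lambda>n. f (s n)) = (\<lambda>n. 0)" using s unfolding K_def by auto
      ultimately have "f u = 0" using LIMSEQ_unique tendsto_const by metis
      then show False using fu by simp
    qed
    have approxK: "\<exists>x. x \<noteq> 0 \<and> (\<forall>k\<in>K. \<bar>blinfun_apply k x\<bar> \<le> \<epsilon> * norm x * norm k)" if epos: "\<epsilon> > 0" for \<epsilon>
    proof -
      obtain x where x: "\<not> (\<epsilon> * norm x \<le> (SUP y\<in>{y\<in>K. norm y \<le> 1}. blinfun_apply y x))"
        using notnK subK epos unfolding norming_def by blast
      define S where "S = (SUP y\<in>{y\<in>K. norm y \<le> 1}. blinfun_apply y x)"
      have K0: "0 \<in> K" using subK subspace_0 by blast
      have Sge: "blinfun_apply k x \<le> S" if "k \<in> K" "norm k \<le> 1" for k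
        unfolding S_def by (rule cSUP_upper) (use that bdd_eval in auto)
      have "0 \<le> S" using Sge[OF K0] by simp
      then have xnz: "x \<noteq> 0" using x S_def by auto
      have "\<bar>blinfun_apply k x\<bar> \<le> \<epsilon> * norm x * norm k" if kK: "k \<in> K" for k
      proof (cases "k = 0")
        case True then show ?thesis by simp
      next
        case False
        define k' where "k' = (1 / norm k) *\<^sub>R k"
        have k'K: "k' \<in> K" unfolding k'_def by (rule subspace_scale[OF subK kK])
        have mk'K: "- k' \<in> K" using subspace_neg[OF subK k'K] .
        have nk': "norm k' = 1" using False by (simp add: k'_def)
        have "blinfun_apply k' x \<le> S" using Sge[OF k'K] nk' by simp
        moreover have "- blinfun_apply k' x \<le> S" using Sge[OF mk'K] nk' by (simp add: blinfun.minus_left)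
        ultimately have "\<bar>blinfun_apply k' x\<bar> \<le> \<epsilon> * norm x" using x S_def by linarith
        moreover have "blinfun_apply k x = norm k * blinfun_apply k' x" using False
          by (simp add: k'_def blinfun.scaleR_left)
        ultimately show ?thesis using False
          by (simp add: abs_mult)
      qed
      then show ?thesis using xnz by blast
    qed
    define D where "D = 1 + B * norm u"
    have Dpos: "D > 0" unfolding D_def using Bpos by (simp add: add_pos_nonneg)
    define \<epsilon> where "\<epsilon> = c / (2 * D) * min 1 (\<delta> / B)"
    have epos: "\<epsilon> > 0" unfolding \<epsilon>_def using cpos Dpos Bpos dpos by simp
    define P where "P = \<epsilon> * D"
    have P1: "P \<le> c / 2" unfolding P_def \<epsilon>_def using Dpos cpos by (simp add: field_simps)
    have P2: "2 * B * P \<le> c * \<delta>" unfolding P_def \<epsilon>_def using Dpos cpos Bpos dpos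
      by (simp add: field_simps min_def)
    have Ppos: "P > 0" unfolding P_def using epos Dpos by simp
    obtain x where xnz: "x \<noteq> 0" and xK: "\<And>k. k \<in> K \<Longrightarrow> \<bar>blinfun_apply k x\<bar> \<le> \<epsilon> * norm x * norm k"
      using approxK[OF epos] by blast
    define a where "a = blinfun_apply u x"
    have E1: "\<bar>blinfun_apply y x - f y * a\<bar> \<le> P * norm x * norm y" if yY: "y \<in> Y" for y
    proof -
      define k where "k = y - f y *\<^sub>R u"
      have kY: "k \<in> Y" unfolding k_def using sub yY uY by (simp add: subspace_diff subspace_scale)
      have "f k = 0" unfolding k_def using fdiff[OF yY subspace_scale[OF sub uY]] fscale[OF uY] fu by simp
      then have kK: "k \<in> K" using kY K_def by simp
      have "norm k \<le> norm y + norm (f y *\<^sub>R u)" unfolding k_def by (rule norm_triangle_ineq4)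
      also have "norm (f y *\<^sub>R u) = \<bar>f y\<bar> * norm u" by simp
      also have "\<bar>f y\<bar> * norm u \<le> B * norm y * norm u" using Bf[OF yY] by (simp add: mult_right_mono)
      finally have nk: "norm k \<le> D * norm y" unfolding D_def by (simp add: algebra_simps)
      have "blinfun_apply y x - f y * a = blinfun_apply k x"
        by (simp add: k_def a_def blinfun.diff_left blinfun.scaleR_left)
      then have "\<bar>blinfun_apply y x - f y * a\<bar> \<le> \<epsilon> * norm x * norm k" using xK[OF kK] by simp
      also have "\<dots> \<le> \<epsilon> * norm x * (D * norm y)" using nk epos by (simp add: mult_left_mono)
      finally show ?thesis by (simp add: P_def algebra_simps)
    qed
    have "c * norm x \<le> \<bar>a\<bar> * B + P * norm x"
    proof (rule cN)
      show "0 \<le> \<bar>a\<bar> * B + P * norm x" using Bpos Ppos by simp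
    next
      fix y assume yY: "y \<in> Y"
      have "f y * a \<le> \<bar>f y * a\<bar>" by (rule abs_ge_self)
      also have "\<dots> = \<bar>a\<bar> * \<bar>f y\<bar>" by (simp add: abs_mult)
      also have "\<dots> \<le> \<bar>a\<bar> * (B * norm y)" by (rule mult_left_mono[OF Bf[OF yY] abs_ge_zero])
      finally have "f y * a \<le> \<bar>a\<bar> * (B * norm y)" .
      then show "blinfun_apply y x \<le> (\<bar>a\<bar> * B + P * norm x) * norm y"
        using E1[OF yY] by (simp add: algebra_simps abs_le_iff)
    qed
    then have aB: "c * norm x / 2 \<le> \<bar>a\<bar> * B"
      using P1 mult_right_mono[OF P1 norm_ge_zero[of x]] by linarith
    have nxpos: "norm x > 0" using xnz by simp
    have "c * norm x > 0" using cpos nxpos by simp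
    then have anz: "a \<noteq> 0" using aB by auto
    show ?thesis
    proof (intro exI ballI)
      fix y assume yY: "y \<in> Y"
      have eq: "blinfun_apply y ((1 / a) *\<^sub>R x) - f y = (blinfun_apply y x - f y * a) / a"
        using anz by (simp add: blinfun.scaleR_right field_simps)
      have "P * norm x * norm y \<le> \<delta> * norm y * \<bar>a\<bar>"
      proof -
        have "2 * B * (P * norm x * norm y) \<le> c * \<delta> * (norm x * norm y)"
          using mult_right_mono[OF P2 mult_nonneg_nonneg[OF norm_ge_zero norm_ge_zero], of x y]
          by (simp add: mult.assoc)
        also have "\<dots> = \<delta> * norm y * (c * norm x)" by (simp add: algebra_simps)
        also have "\<dots> \<le> \<delta> * norm y * (2 * (\<bar>a\<bar> * B))"
          using aB dpos by (intro mult_left_mono) auto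
        finally have "2 * B * (P * norm x * norm y) \<le> 2 * B * (\<delta> * norm y * \<bar>a\<bar>)"
          by (simp add: algebra_simps)
        then show ?thesis using Bpos by simp
      qed
      then have "\<bar>blinfun_apply y x - f y * a\<bar> \<le> \<delta> * norm y * \<bar>a\<bar>" using E1[OF yY] by linarith
      then show "\<bar>blinfun_apply y ((1 / a) *\<^sub>R x) - f y\<bar> \<le> \<delta> * norm y"
        unfolding eq using anz by (simp add: divide_le_eq)
    qed
  qed
  have "\<forall>n. \<exists>z. \<forall>y\<in>Y. \<bar>blinfun_apply y z - f y\<bar> \<le> (1 / real (Suc n)) * norm y"
  proof
    fix n :: nat
    show "\<exists>z. \<forall>y\<in>Y. \<bar>blinfun_apply y z - f y\<bar> \<le> (1 / real (Suc n)) * norm y"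
      by (rule approx) simp
  qed
  then obtain zz where zz: "\<And>n y. y \<in> Y \<Longrightarrow> \<bar>blinfun_apply y (zz n) - f y\<bar> \<le> (1 / real (Suc n)) * norm y"
    by metis
  have dz: "c * norm (zz m - zz n) \<le> 1 / real (Suc m) + 1 / real (Suc n)" for m n
  proof (rule cN)
    show "0 \<le> 1 / real (Suc m) + 1 / real (Suc n)" by simp
  next
    fix y assume yY: "y \<in> Y"
    have "blinfun_apply y (zz m - zz n) = (blinfun_apply y (zz m) - f y) - (blinfun_apply y (zz n) - f y)"
      by (simp add: blinfun.diff_right)
    also have "\<dots> \<le> (1 / real (Suc m)) * norm y + (1 / real (Suc n)) * norm y"
      using zz[OF yY, of m] zz[OF yY, of n] by linarith
    finally show "blinfun_apply y (zz m - zz n) \<le> (1 / real (Suc m) + 1 / real (Suc n)) * norm y"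
      by (simp add: algebra_simps)
  qed
  have "Cauchy zz"
  proof (rule CauchyI)
    fix e :: real assume epos: "e > 0"
    then obtain N where N: "inverse (real (Suc N)) < c * e / 2"
      using reals_Archimedean[of "c * e / 2"] cpos epos by auto
    show "\<exists>M. \<forall>m\<ge>M. \<forall>n\<ge>M. norm (zz m - zz n) < e"
    proof (intro exI allI impI)
      fix m n assume mn: "m \<ge> N" "n \<ge> N"
      have "1 / real (Suc m) \<le> 1 / real (Suc N)" "1 / real (Suc n) \<le> 1 / real (Suc N)"
        using mn by (simp_all add: frac_le)
      then have "c * norm (zz m - zz n) < c * e" using dz[of m n] N by (simp add: inverse_eq_divide)
      then show "norm (zz m - zz n) < e" using cpos by simp
    qed
  qed
  then obtain x0 where x0: "zz \<longlonglongrightarrow> x0" using Cauchy_convergent convergent_def by blast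
  show ?thesis
  proof (intro exI ballI)
    fix y assume yY: "y \<in> Y"
    have "(\<lambda>n. blinfun_apply y (zz n)) \<longlonglongrightarrow> blinfun_apply y x0"
      by (rule blinfun.tendsto[OF tendsto_const x0])
    then have l1: "(\<lambda>n. \<bar>blinfun_apply y (zz n) - f y\<bar>) \<longlonglongrightarrow> \<bar>blinfun_apply y x0 - f y\<bar>"
      using x0 by (intro tendsto_intros)
    have "(\<lambda>n. 1 / real (Suc n)) \<longlonglongrightarrow> 0" by (rule LIMSEQ_Suc[OF lim_inverse_n'])
    then have l2: "(\<lambda>n. 1 / real (Suc n) * norm y) \<longlonglongrightarrow> 0 * norm y" by (intro tendsto_intros)
    have "\<bar>blinfun_apply y x0 - f y\<bar> \<le> 0 * norm y"
      by (rule LIMSEQ_le[OF l1 l2]) (use zz[OF yY] in auto)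
    then show "f y = blinfun_apply y x0" by simp
  qed
qed


theorem theorem3p3:
  "fully_Mazur TYPE('a::banach) \<longleftrightarrow>
     (\<forall>Y :: ('a \<Rightarrow>\<^sub>L real) set. norming Y \<and> closed Y \<longrightarrow> S1 Y = UNIV)"
proof
  assume FM: "fully_Mazur TYPE('a::banach)"
  show "\<forall>Y :: ('a \<Rightarrow>\<^sub>L real) set. norming Y \<and> closed Y \<longrightarrow> S1 Y = UNIV"
  proof (intro allI impI, elim conjE)
    fix Y :: "('a \<Rightarrow>\<^sub>L real) set"
    assume "norming Y" "closed Y"
    then show "S1 Y = UNIV" by (rule dir1[OF FM])
  qed
next
  assume H: "\<forall>Y :: ('a \<Rightarrow>\<^sub>L real) set. norming Y \<and> closed Y \<longrightarrow> S1 Y = UNIV"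
  show "fully_Mazur TYPE('a::banach)"
    unfolding fully_Mazur_def
  proof (intro allI impI, elim conjE)
    fix Y :: "('a \<Rightarrow>\<^sub>L real) set" and f
    assume Yn: "norming Y" and Yc: "closed Y" and lin: "linear_on_subspace Y f"
      and sc: "wstar_seq_continuous_on Y f"
    have HK: "\<And>K :: ('a \<Rightarrow>\<^sub>L real) set. norming K \<Longrightarrow> closed K \<Longrightarrow> S1 K = UNIV"
      using H by simp
    obtain x0 where x0: "\<And>y. y \<in> Y \<Longrightarrow> f y = blinfun_apply y x0"
      using repr[OF Yn Yc lin sc HK] by metis
    have "continuous_map (pullback_topology UNIV blinfun_apply (powertop_real UNIV)) euclideanreal
        ((\<lambda>\<phi>. \<phi> x0) \<circ> blinfun_apply)"
      by (rule continuous_map_pullback[OF continuous_map_product_projection]) simp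
    then have "continuous_map (wstar_topology :: ('a \<Rightarrow>\<^sub>L real) topology) euclideanreal (\<lambda>y. blinfun_apply y x0)"
      unfolding wstar_topology_def by (simp add: o_def)
    then have "continuous_map (subtopology wstar_topology Y) euclideanreal (\<lambda>y. blinfun_apply y x0)"
      by (rule continuous_map_from_subtopology)
    then show "wstar_continuous_on Y f"
      unfolding wstar_continuous_on_def
      by (rule continuous_map_eq) (simp add: x0)
  qed
qed

end
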